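(* Let $(A,B)$ be a $3\times 3$ bimatrix game which is zero-sum, satisfies $a_{ij}\neq a_{i'j}$ and $b_{ij}\ne b_{ij'}$ for all $i\ne i'$, $j\ne j'$, and has a unique Nash equilibrium, which lies in the interior of $\Sigma_A\times\Sigma_B$. Then: (1) the transition diagram of $(A,B)$ has no alternating cycles; (2) the transition diagram has no sinks; (3) the transition diagram has no sources.
   Context: $\Sigma_A$, $\Sigma_B$ are the simplices of probability row, resp. column, vectors in $\mathbb{R}^3$; $\mathrm{BR}_A(q)=\operatorname{argmax}_{p\in\Sigma_A}pAq$, $\mathrm{BR}_B(p)=\operatorname{argmax}_{q\in\Sigma_B}pBq$; a Nash equilibrium is $(\bar p,\bar q)$ with $\bar p\in\mathrm{BR}_A(\bar q)$, $\bar q\in\mathrm{BR}_B(\bar p)$. The game is zero-sum if there are $e,g>0$, $f_j,h_i\in\mathbb{R}$ such that $C=(e a_{ij}+f_j)$ and $D=(g b_{ij}+h_i)$ satisfy $C+D=0$. The transition diagram: for $i\ne i'$, $(i,j)\to(i',j)$ iff $a_{i'j}>a_{ij}$; for $j\ne j'$, $(i,j)\to(i,j')$ iff $b_{ij'}>b_{ij}$. A cell $(i,j)$ is a sink if $(i',j)\to(i,j)$ and $(i,j')\to(i,j)$ for all $i'\ne i,j'\ne j$, and a source if all these arrows point out of $(i,j)$. An alternating cycle is a sequence of cells $(i_0,j_0),\dots,(i_n,j_n)=(i_0,j_0)$, consecutive ones differing in exactly one coordinate, such that either $(i_k,j_k)\to(i_{k+1},j_{k+1})$ whenever $i_k\ne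 i_{k+1}$ and $(i_{k+1},j_{k+1})\to(i_k,j_k)$ whenever $j_k\ne j_{k+1}$, or the same with both directions reversed. *)

theory Defs
  imports "HOL-Analysis.Analysis"
begin

text \<open>3x3 bimatrix games. Payoff matrices are real^3^3 (entry M$i$j, row i, column j);
mixed strategies are vectors in real^3.\<close>

type_synonym mat3 = "real^3^3"
type_synonym cell = "3 \<times> 3"

definition simplex3 :: "(real^3) set" where
  "simplex3 = {p. (\<forall>i. 0 \<le> p$i) \<and> (\<Sum>i\<in>UNIV. p$i) = 1}"

definition payoff :: "mat3 \<Rightarrow> real^3 \<Rightarrow> real^3 \<Rightarrow> real" where
  "payoff M p q = (\<Sum>i\<in>UNIV. \<Sum>j\<in>UNIV. p$i * M$i$j * q$j)"

definition BR_A :: "mat3 \<Rightarrow> real^3 \<Rightarrow> (real^3) set" where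
  "BR_A A q = {p \<in> simplex3. \<forall>p'\<in>simplex3. payoff A p' q \<le> payoff A p q}"

definition BR_B :: "mat3 \<Rightarrow> real^3 \<Rightarrow> (real^3) set" where
  "BR_B B p = {q \<in> simplex3. \<forall>q'\<in>simplex3. payoff B p q' \<le> payoff B p q}"

definition nash :: "mat3 \<Rightarrow> mat3 \<Rightarrow> real^3 \<Rightarrow> real^3 \<Rightarrow> bool" where
  "nash A B p q \<longleftrightarrow> p \<in> simplex3 \<and> q \<in> simplex3 \<and> p \<in> BR_A A q \<and> q \<in> BR_B B p"

definition zero_sum :: "mat3 \<Rightarrow> mat3 \<Rightarrow> bool" where
  "zero_sum A B \<longleftrightarrow> (\<exists>e g (f::3 \<Rightarrow> real) (h::3 \<Rightarrow> real). e > 0 \<and> g > 0 \<and>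
     (\<forall>i j. (e * A$i$j + f j) + (g * B$i$j + h i) = 0))"

definition arrow :: "mat3 \<Rightarrow> mat3 \<Rightarrow> cell \<Rightarrow> cell \<Rightarrow> bool" where
  "arrow A B c d \<longleftrightarrow>
     (fst c \<noteq> fst d \<and> snd c = snd d \<and> A$(fst d)$(snd c) > A$(fst c)$(snd c)) \<or>
     (fst c = fst d \<and> snd c \<noteq> snd d \<and> B$(fst c)$(snd d) > B$(fst c)$(snd c))"

definition is_sink :: "mat3 \<Rightarrow> mat3 \<Rightarrow> cell \<Rightarrow> bool" where
  "is_sink A B c \<longleftrightarrow>
     (\<forall>i'. i' \<noteq> fst c \<longrightarrow> arrow A B (i', snd c) c) \<and>
     (\<forall>j'. j' \<noteq> snd c \<longrightarrow> arrow A B (fst c, j') c)"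

definition is_source :: "mat3 \<Rightarrow> mat3 \<Rightarrow> cell \<Rightarrow> bool" where
  "is_source A B c \<longleftrightarrow>
     (\<forall>i'. i' \<noteq> fst c \<longrightarrow> arrow A B c (i', snd c)) \<and>
     (\<forall>j'. j' \<noteq> snd c \<longrightarrow> arrow A B c (fst c, j'))"

definition adjacent :: "cell \<Rightarrow> cell \<Rightarrow> bool" where
  "adjacent c d \<longleftrightarrow> (fst c \<noteq> fst d \<and> snd c = snd d) \<or> (fst c = fst d \<and> snd c \<noteq> snd d)"

definition alternating_cycle :: "mat3 \<Rightarrow> mat3 \<Rightarrow> nat \<Rightarrow> (nat \<Rightarrow> cell) \<Rightarrow> bool" where
  "alternating_cycle A B n c \<longleftrightarrow> 1 \<le> n \<and> c n = c 0 \<and>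
     (\<forall>k<n. adjacent (c k) (c (Suc k))) \<and>
     ((\<forall>k<n. (fst (c k) \<noteq> fst (c (Suc k)) \<longrightarrow> arrow A B (c k) (c (Suc k))) \<and>
             (snd (c k) \<noteq> snd (c (Suc k)) \<longrightarrow> arrow A B (c (Suc k)) (c k))) \<or>
      (\<forall>k<n. (fst (c k) \<noteq> fst (c (Suc k)) \<longrightarrow> arrow A B (c (Suc k)) (c k)) \<and>
             (snd (c k) \<noteq> snd (c (Suc k)) \<longrightarrow> arrow A B (c k) (c (Suc k)))))"

end

theory Submission
  imports Defs
begin

lemma payoff_A_alt: "payoff M p q = (\<Sum>i\<in>UNIV. p$i * (\<Sum>j\<in>UNIV. M$i$j * q$j))"
  unfolding payoff_def by (simp add: sum_distrib_left mult.assoc)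
lemma payoff_B_alt: "payoff M p q = (\<Sum>j\<in>UNIV. q$j * (\<Sum>i\<in>UNIV. p$i * M$i$j))"
  unfolding payoff_def by (subst sum.swap) (simp add: sum_distrib_left mult_ac)
lemma payoff_axis_A: "payoff M (axis k 1) q = (\<Sum>j\<in>UNIV. M$k$j * q$j)"
  by (simp add: payoff_A_alt axis_def if_distrib[of "\<lambda>x. x * _"] cong: if_cong)
lemma payoff_axis_B: "payoff M p (axis k 1) = (\<Sum>i\<in>UNIV. p$i * M$i$k)"
  by (simp add: payoff_B_alt axis_def if_distrib[of "\<lambda>x. x * _"] cong: if_cong)
lemma indiff:
  fixes r :: "3 \<Rightarrow> real" and w :: "real^3"
  assumes le: "\<forall>k. r k \<le> (\<Sum>i\<in>UNIV. w$i * r i)" and pos: "\<forall>i. 0 < w$i"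
    and s: "(\<Sum>i\<in>UNIV. w$i) = 1"
  shows "r k = (\<Sum>i\<in>UNIV. w$i * r i)"
proof -
  define v where "v = (\<Sum>i\<in>UNIV. w$i * r i)"
  have "(\<Sum>i\<in>UNIV. w$i * (v - r i)) = (\<Sum>i\<in>UNIV. w$i * v) - v"
    unfolding right_diff_distrib sum_subtractf v_def ..
  also have "(\<Sum>i\<in>UNIV. w$i * v) = v" using s by (simp add: sum_distrib_right[symmetric])
  finally have z: "(\<Sum>i\<in>UNIV. w$i * (v - r i)) = 0" by simp
  have nn: "\<forall>i\<in>UNIV. 0 \<le> w$i * (v - r i)"
    using le pos unfolding v_def by (simp add: less_imp_le)
  have "w$k * (v - r k) = 0"
    using z nn sum_nonneg_eq_0_iff[of UNIV "\<lambda>i. w$i * (v - r i)"] by simp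
  then show ?thesis using pos[rule_format, of k] unfolding v_def[symmetric] by auto
qed

lemma cyc_step:
  fixes C :: "3 \<Rightarrow> 3 \<Rightarrow> real"
  assumes Amono: "\<And>a a' b. A$a$b < A$a'$b \<longleftrightarrow> C a b < C a' b"
    and Bmono: "\<And>a b b'. B$a$b < B$a$b' \<longleftrightarrow> C a b' < C a b"
    and adj: "adjacent x y" and h1: "fst x \<noteq> fst y \<longrightarrow> arrow A B x y"
    and h2: "snd x \<noteq> snd y \<longrightarrow> arrow A B y x"
  shows "C (fst x) (snd x) < C (fst y) (snd y)"
proof -
  obtain a b a' b' where x: "x = (a, b)" and y: "y = (a', b')" by (meson prod.exhaust)
  show ?thesis
  proof (cases "a = a'")
    case True
    then have "b \<noteq> b'" using adj unfolding x y adjacent_def by simp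
    then have "B$a'$b' < B$a'$b" using h2 True unfolding x y arrow_def by simp
    then show ?thesis using Bmono True unfolding x y by simp
  next
    case False
    then have "b = b'" using adj unfolding x y adjacent_def by simp
    then have "A$a$b < A$a'$b" using h1 False unfolding x y arrow_def by simp
    then show ?thesis using Amono \<open>b = b'\<close> unfolding x y by simp
  qed
qed

lemma axis_simplex: "axis k (1::real) \<in> simplex3"
  unfolding simplex3_def by (auto simp: axis_def)

lemma other3: "\<exists>x::3. x \<noteq> j" using zero_neq_one[where 'a=3] by metis

lemma wavg_lt:
  fixes w :: "real^3" and u :: "3 \<Rightarrow> real"
  assumes pos: "\<forall>i. 0 < w$i" and s: "(\<Sum>i\<in>UNIV. w$i) = 1"
    and lt: "\<And>x. x \<noteq> i0 \<Longrightarrow> u x < u i0"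
  shows "(\<Sum>x\<in>UNIV. w$x * u x) < u i0"
proof -
  obtain i1 :: 3 where i1: "i1 \<noteq> i0" using other3 by blast
  have "(\<Sum>x\<in>UNIV. w$x * u x) < (\<Sum>x\<in>UNIV. w$x * u i0)"
  proof (rule sum_strict_mono_ex1)
    show "\<forall>x\<in>UNIV. w$x * u x \<le> w$x * u i0"
    proof
      fix x :: 3
      show "w$x * u x \<le> w$x * u i0"
      proof (cases "x = i0")
        case False
        then show ?thesis using lt[OF False] pos by (simp add: less_imp_le)
      qed simp
    qed
    show "\<exists>x\<in>UNIV. w$x * u x < w$x * u i0"
      using lt[OF i1] pos by auto
  qed simp
  also have "\<dots> = u i0" using s by (simp add: sum_distrib_right[symmetric])
  finally show ?thesis .
qed

lemma wavg_gt:
  fixes w :: "real^3" and u :: "3 \<Rightarrow> real"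
  assumes pos: "\<forall>i. 0 < w$i" and s: "(\<Sum>i\<in>UNIV. w$i) = 1"
    and lt: "\<And>x. x \<noteq> i0 \<Longrightarrow> u i0 < u x"
  shows "u i0 < (\<Sum>x\<in>UNIV. w$x * u x)"
proof -
  have "(\<Sum>x\<in>UNIV. w$x * (- u x)) < - u i0"
    by (rule wavg_lt[OF pos s]) (simp add: lt)
  then show ?thesis by (simp add: sum_negf)
qed

theorem mainTheorem3:
  fixes A B :: mat3 and p0 q0 :: "real^3"
  assumes zs: "zero_sum A B"
    and gen_A: "\<forall>i i' j. i \<noteq> i' \<longrightarrow> A$i$j \<noteq> A$i'$j"
    and gen_B: "\<forall>i j j'. j \<noteq> j' \<longrightarrow> B$i$j \<noteq> B$i$j'"
    and ne: "nash A B p0 q0"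
    and unique: "\<forall>p q. nash A B p q \<longrightarrow> p = p0 \<and> q = q0"
    and interior: "\<forall>i. 0 < p0$i" "\<forall>j. 0 < q0$j"
  shows "(\<nexists>n c. alternating_cycle A B n c) \<and>
         (\<nexists>c. is_sink A B c) \<and>
         (\<nexists>c. is_source A B c)"
proof -
  obtain e g and f h :: "3 \<Rightarrow> real" where eg: "e > 0" "g > 0"
    and rel: "\<And>i j. (e * A$i$j + f j) + (g * B$i$j + h i) = 0"
    using zs unfolding zero_sum_def by blast
  define C where "C = (\<lambda>a b. e * A$a$b + f b)"
  have D: "\<And>a b. g * B$a$b + h a = - C a b" using rel unfolding C_def by (simp add: algebra_simps eq_neg_iff_add_eq_0)
  have Amono: "\<And>a a' b. A$a$b < A$a'$b \<longleftrightarrow> C a b < C a' b" using eg unfolding C_def by simp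
  have Bmono: "\<And>a b b'. B$a$b < B$a$b' \<longleftrightarrow> C a b' < C a b"
  proof -
    fix a b b'
    have "B$a$b < B$a$b' \<longleftrightarrow> g * B$a$b + h a < g * B$a$b' + h a" using eg by simp
    then show "B$a$b < B$a$b' \<longleftrightarrow> C a b' < C a b" using D by simp
  qed
  have P1: "\<nexists>n c. alternating_cycle A B n c"
  proof
    assume "\<exists>n c. alternating_cycle A B n c"
    then obtain n c where ac: "alternating_cycle A B n c" by blast
    define Cc where "Cc = (\<lambda>x. C (fst x) (snd x))"
    have n1: "1 \<le> n" and cn: "c n = c 0" and adj: "\<forall>k<n. adjacent (c k) (c (Suc k))"
      using ac unfolding alternating_cycle_def by auto
    have dir: "(\<forall>k<n. Cc (c k) < Cc (c (Suc k))) \<or> (\<forall>k<n. Cc (c (Suc k)) < Cc (c k))"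
    proof (cases "\<forall>k<n. (fst (c k) \<noteq> fst (c (Suc k)) \<longrightarrow> arrow A B (c k) (c (Suc k))) \<and>
             (snd (c k) \<noteq> snd (c (Suc k)) \<longrightarrow> arrow A B (c (Suc k)) (c k))")
      case True
      have "\<forall>k<n. Cc (c k) < Cc (c (Suc k))"
      proof (intro allI impI)
        fix k assume k: "k < n"
        from adj k have "adjacent (c k) (c (Suc k))" by blast
        then show "Cc (c k) < Cc (c (Suc k))"
          using cyc_step[OF Amono Bmono, of "c k" "c (Suc k)"] True k unfolding Cc_def by blast
      qed
      then show ?thesis by blast
    next
      case False
      then have F: "\<forall>k<n. (fst (c k) \<noteq> fst (c (Suc k)) \<longrightarrow> arrow A B (c (Suc k)) (c k)) \<and>
             (snd (c k) \<noteq> snd (c (Suc k)) \<longrightarrow> arrow A B (c k) (c (Suc k)))"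
        using ac unfolding alternating_cycle_def by blast
      have "\<forall>k<n. Cc (c (Suc k)) < Cc (c k)"
      proof (intro allI impI)
        fix k assume k: "k < n"
        from adj k have "adjacent (c k) (c (Suc k))" by blast
        then show "Cc (c (Suc k)) < Cc (c k)"
          using cyc_step[OF Amono Bmono, of "c (Suc k)" "c k"] F k unfolding Cc_def adjacent_def by auto
      qed
      then show ?thesis by blast
    qed
    then show False
    proof
      assume st: "\<forall>k<n. Cc (c k) < Cc (c (Suc k))"
      have "\<And>m. Suc m \<le> n \<Longrightarrow> Cc (c 0) < Cc (c (Suc m))"
      proof -
        fix m show "Suc m \<le> n \<Longrightarrow> Cc (c 0) < Cc (c (Suc m))"
        proof (induction m)
          case 0 then show ?case using st by simp
        next
          case (Suc m)
          have a: "Cc (c 0) < Cc (c (Suc m))" using Suc by simp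
          have b: "Cc (c (Suc m)) < Cc (c (Suc (Suc m)))" using st Suc.prems by simp
          from a b show ?case by linarith
        qed
      qed
      from this[of "n - 1"] n1 cn show False by simp
    next
      assume st: "\<forall>k<n. Cc (c (Suc k)) < Cc (c k)"
      have "\<And>m. Suc m \<le> n \<Longrightarrow> Cc (c (Suc m)) < Cc (c 0)"
      proof -
        fix m show "Suc m \<le> n \<Longrightarrow> Cc (c (Suc m)) < Cc (c 0)"
        proof (induction m)
          case 0 then show ?case using st by simp
        next
          case (Suc m)
          have a: "Cc (c (Suc m)) < Cc (c 0)" using Suc by simp
          have b: "Cc (c (Suc (Suc m))) < Cc (c (Suc m))" using st Suc.prems by simp
          from a b show ?case by linarith
        qed
      qed
      from this[of "n - 1"] n1 cn show False by simp
    qed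
  qed
  have p0s: "p0 \<in> simplex3" and q0s: "q0 \<in> simplex3" and brA: "p0 \<in> BR_A A q0" and brB: "q0 \<in> BR_B B p0"
    using ne unfolding nash_def by auto
  have sp: "(\<Sum>i\<in>UNIV. p0$i) = 1" using p0s unfolding simplex3_def by auto
  have sq: "(\<Sum>i\<in>UNIV. q0$i) = 1" using q0s unfolding simplex3_def by auto
  define rA where "rA = (\<lambda>k. \<Sum>j\<in>UNIV. A$k$j * q0$j)"
  define cB where "cB = (\<lambda>k. \<Sum>i\<in>UNIV. p0$i * B$i$k)"
  have indA: "\<And>k. rA k = (\<Sum>i\<in>UNIV. p0$i * rA i)"
  proof (rule indiff[OF _ interior(1) sp], intro allI)
    fix k
    have "payoff A (axis k 1) q0 \<le> payoff A p0 q0" using brA axis_simplex unfolding BR_A_def by blast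
    then show "rA k \<le> (\<Sum>i\<in>UNIV. p0$i * rA i)" unfolding payoff_axis_A unfolding rA_def payoff_A_alt .
  qed
  have indB: "\<And>k. cB k = (\<Sum>i\<in>UNIV. q0$i * cB i)"
  proof (rule indiff[OF _ interior(2) sq], intro allI)
    fix k
    have "payoff B p0 (axis k 1) \<le> payoff B p0 q0" using brB axis_simplex unfolding BR_B_def by blast
    then show "cB k \<le> (\<Sum>i\<in>UNIV. q0$i * cB i)" unfolding payoff_axis_B unfolding cB_def payoff_B_alt .
  qed
  define rC where "rC = (\<lambda>a. \<Sum>b\<in>UNIV. C a b * q0$b)"
  define cC where "cC = (\<lambda>b. \<Sum>a\<in>UNIV. p0$a * C a b)"
  have rCeq: "\<And>a a'. rC a = rC a'"
  proof -
    fix a a'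
    have "\<And>a. rC a = e * rA a + (\<Sum>b\<in>UNIV. f b * q0$b)"
      unfolding rC_def rA_def C_def by (simp add: algebra_simps sum.distrib sum_distrib_left)
    then show "rC a = rC a'" using indA[of a] indA[of a'] by simp
  qed
  have cCeq: "\<And>b b'. cC b = cC b'"
  proof -
    fix b b'
    have "\<And>b. cC b = - (g * cB b + (\<Sum>a\<in>UNIV. p0$a * h a))"
    proof -
      fix b
      have "cC b = (\<Sum>a\<in>UNIV. - (g * (p0$a * B$a$b) + p0$a * h a))"
        unfolding cC_def
      proof (rule sum.cong[OF refl])
        fix a
        have "C a b = - (g * B$a$b + h a)" using D[of a b] by simp
        then show "p0$a * C a b = - (g * (p0$a * B$a$b) + p0$a * h a)" by (simp only:) (simp add: algebra_simps)
      qed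
      also have "\<dots> = - (g * cB b + (\<Sum>a\<in>UNIV. p0$a * h a))"
        unfolding cB_def sum_negf sum.distrib sum_distrib_left ..
      finally show "cC b = - (g * cB b + (\<Sum>a\<in>UNIV. p0$a * h a))" .
    qed
    then show "cC b = cC b'" using indB[of b] indB[of b'] by simp
  qed
  have rc: "\<And>a b. rC a = cC b"
  proof -
    fix a b
    have "(\<Sum>a'\<in>UNIV. p0$a' * rC a') = (\<Sum>a'\<in>UNIV. p0$a' * rC a)"
      by (rule sum.cong[OF refl]) (rule arg_cong[OF rCeq])
    also have "\<dots> = rC a" using sp by (simp add: sum_distrib_right[symmetric])
    finally have "rC a = (\<Sum>a'\<in>UNIV. p0$a' * rC a')" by simp
    also have "\<dots> = (\<Sum>b'\<in>UNIV. q0$b' * cC b')"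
      unfolding rC_def cC_def sum_distrib_left by (subst sum.swap) (simp add: mult_ac)
    also have "\<dots> = (\<Sum>b'\<in>UNIV. q0$b' * cC b)"
      by (rule sum.cong[OF refl]) (rule arg_cong[OF cCeq])
    also have "\<dots> = cC b" using sq by (simp add: sum_distrib_right[symmetric])
    finally show "rC a = cC b" .
  qed
  have P2: "\<nexists>c. is_sink A B c"
  proof
    assume "\<exists>c. is_sink A B c"
    then obtain i j where s: "is_sink A B (i, j)" by (metis prod.collapse)
    have col: "\<And>i'. i' \<noteq> i \<Longrightarrow> C i' j < C i j"
    proof -
      fix i' assume "i' \<noteq> i"
      then have "arrow A B (i',j) (i,j)" using s unfolding is_sink_def by simp
      then have "A$i'$j < A$i$j" unfolding arrow_def by simp
      then show "C i' j < C i j" by (simp add: Amono)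
    qed
    have row: "\<And>j'. j' \<noteq> j \<Longrightarrow> C i j < C i j'"
    proof -
      fix j' assume "j' \<noteq> j"
      then have "arrow A B (i,j') (i,j)" using s unfolding is_sink_def by simp
      then have "B$i$j' < B$i$j" unfolding arrow_def by simp
      then show "C i j < C i j'" by (simp add: Bmono)
    qed
    obtain i' where i': "i' \<noteq> i" using other3 by blast
    obtain j' where j': "j' \<noteq> j" using other3 by blast
    have "cC j < C i j" unfolding cC_def by (rule wavg_lt[OF interior(1) sp]) (rule col)
    moreover have "C i j < rC i" unfolding rC_def
      using wavg_gt[OF interior(2) sq, of j "\<lambda>b. C i b", OF row] by (simp add: mult.commute)
    ultimately have "cC j < rC i" by linarith
    then show False using rc[of i j] by simp
  qed
  have P3: "\<nexists>c. is_source A B c"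
  proof
    assume "\<exists>c. is_source A B c"
    then obtain i j where s: "is_source A B (i, j)" by (metis prod.collapse)
    have col: "\<And>i'. i' \<noteq> i \<Longrightarrow> C i j < C i' j"
    proof -
      fix i' assume "i' \<noteq> i"
      then have "arrow A B (i,j) (i',j)" using s unfolding is_source_def by simp
      then have "A$i$j < A$i'$j" unfolding arrow_def by simp
      then show "C i j < C i' j" by (simp add: Amono)
    qed
    have row: "\<And>j'. j' \<noteq> j \<Longrightarrow> C i j' < C i j"
    proof -
      fix j' assume "j' \<noteq> j"
      then have "arrow A B (i,j) (i,j')" using s unfolding is_source_def by simp
      then have "B$i$j < B$i$j'" unfolding arrow_def by simp
      then show "C i j' < C i j" by (simp add: Bmono)
    qed
    obtain i' where i': "i' \<noteq> i" using other3 by blast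
    obtain j' where j': "j' \<noteq> j" using other3 by blast
    have "C i j < cC j" unfolding cC_def by (rule wavg_gt[OF interior(1) sp]) (rule col)
    moreover have "rC i < C i j" unfolding rC_def
      using wavg_lt[OF interior(2) sq, of j "\<lambda>b. C i b", OF row] by (simp add: mult.commute)
    ultimately have "rC i < cC j" by linarith
    then show False using rc[of i j] by simp
  qed
  show ?thesis using P1 P2 P3 by blast
qed

end
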